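(* Let $T,\nu,M_t$ be integers with $\nu\ge 0$, $M_t\ge1$ and $T\ge M_t(\nu+1)$. Let $\alpha$ be a primitive element of $\mathbb{F}_{2^T}$, $\xi=\alpha^{\nu+1}$, and $(\theta_0,\dots,\theta_{T-1})$ the trace dual basis of $(\alpha^0,\dots,\alpha^{T-1})$. For $f_0\in\mathbb{F}_{2^T}$ let $f(x)=f_0x$ and let $\mathcal{S}=\{f_0\in\mathbb{F}_{2^T}:\ \mathrm{Tr}(\theta_if(\xi^j))=0\ \forall i\in\{T-\nu,\dots,T-1\},\ \forall j\in\{1,\dots,M_t\}\}$. Then $\frac{1}{T}\log_2|\mathcal{S}|\ge 1-\frac{\nu M_t}{T}$, and for every $f\in\mathcal{S}$ with $f_0\neq0$, $\operatorname{rank}_{\mathbb{F}_2}(\mathbf{U}_f)\ge M_t(\nu+1)$.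
   Context: $\mathrm{Tr}$ is the trace from $\mathbb{F}_{2^T}$ to $\mathbb{F}_2$; the trace dual basis satisfies $\mathrm{Tr}(\theta_i\alpha^j)=\delta_{ij}$. For $f$ let $\mathbf{c}_f=(f(1),f(\xi),\dots,f(\xi^{M_t-1}))^t\in\mathbb{F}_{2^T}^{M_t}$ and $\mathbf{u}_f=(\mathbf{c}_f^t,\alpha\mathbf{c}_f^t,\dots,\alpha^\nu\mathbf{c}_f^t)^t\in\mathbb{F}_{2^T}^{(\nu+1)M_t}$. $\mathbf{U}_f\in\mathbb{F}_2^{(\nu+1)M_t\times T}$ is the binary matrix whose $r$-th row is the coordinate vector of the $r$-th entry of $\mathbf{u}_f$ with respect to the basis $(\alpha^0,\alpha^1,\dots,\alpha^{T-1})$ of $\mathbb{F}_{2^T}$ over $\mathbb{F}_2$. *)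

theory Defs
  imports "Jordan_Normal_Form.DL_Rank" "HOL-Library.Z2"
begin

definition trace2 :: "nat \<Rightarrow> 'a::field \<Rightarrow> 'a" where
  "trace2 T x = (\<Sum>i<T. x ^ (2 ^ i))"

definition primitive_element :: "'a::field \<Rightarrow> bool" where
  "primitive_element a \<longleftrightarrow> a \<noteq> 0 \<and> (\<forall>x. x \<noteq> 0 \<longrightarrow> (\<exists>k::nat. x = a ^ k))"

definition coords :: "'a::field \<Rightarrow> nat \<Rightarrow> 'a \<Rightarrow> nat \<Rightarrow> bit" where
  "coords a T x = (THE c. (\<forall>j\<ge>T. c j = 0) \<and> x = (\<Sum>j<T. of_bit (c j) * a ^ j))"

text \<open>The binary matrix U_f for f(x) = f0 x: row r = k*Mt + m (k \<le> nu, m < Mt) is the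
  coordinate vector of a^k * f(xi^m), where xi = a^(nu+1).\<close>
definition U_mat :: "'a::field \<Rightarrow> nat \<Rightarrow> nat \<Rightarrow> nat \<Rightarrow> 'a \<Rightarrow> bit mat" where
  "U_mat a T nu Mt f0 = mat ((nu + 1) * Mt) T
     (\<lambda>(r, j). coords a T (a ^ (r div Mt) * (f0 * (a ^ (nu + 1)) ^ (r mod Mt))) j)"

end

theory Submission
  imports Defs
begin


lemma bit_cases2: "(b::bit) = 0 \<or> b = 1"
  by (metis bit_not_zero_iff)

definition ob :: "bit \<Rightarrow> 'a::field" where "ob b = of_bit b"

locale ffs =
  fixes T :: nat and \<alpha> :: "'a::{field,finite}" and \<theta> :: "nat \<Rightarrow> 'a"
  assumes char2: "CHAR('a) = 2"
    and card: "card (UNIV :: 'a set) = 2 ^ T"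
    and dual: "\<forall>i<T. \<forall>j<T. trace2 T (\<theta> i * \<alpha> ^ j) = (if i = j then 1 else 0)"
begin

lemma two0: "(2::'a) = 0"
  using of_nat_CHAR[where 'a='a] char2 by simp

lemma add_self: "(x::'a) + x = 0"
proof -
  have "x + x = 2 * x" by simp
  thus ?thesis using two0 by simp
qed

lemma frob: "((x::'a) + y) ^ (2 ^ i) = x ^ (2 ^ i) + y ^ (2 ^ i)"
proof (induction i)
  case 0 then show ?case by simp
next
  case (Suc i)
  have "(x + y) ^ (2 ^ Suc i) = ((x + y) ^ (2 ^ i))\<^sup>2"
    by (simp add: power_mult[symmetric] mult.commute)
  also have "\<dots> = (x ^ (2 ^ i) + y ^ (2 ^ i))\<^sup>2" using Suc by simp
  also have "\<dots> = (x ^ (2 ^ i))\<^sup>2 + (y ^ (2 ^ i))\<^sup>2"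
    by (simp add: power2_sum two0)
  also have "\<dots> = x ^ (2 ^ Suc i) + y ^ (2 ^ Suc i)"
    by (simp add: power_mult[symmetric] mult.commute)
  finally show ?case .
qed

lemma tr_add: "trace2 T (x + y) = trace2 T x + trace2 T (y::'a)"
  unfolding trace2_def by (simp add: frob sum.distrib)

lemma tr_0: "trace2 T (0::'a) = 0"
  unfolding trace2_def by simp

lemma tr_sum: "finite A \<Longrightarrow> trace2 T (\<Sum>j\<in>A. g j) = (\<Sum>j\<in>A. trace2 T (g j :: 'a))"
  by (induction A rule: finite_induct) (simp_all add: tr_0 tr_add)

lemma ofbit_add: "(ob (a + b) :: 'a) = ob a + ob b"
  unfolding ob_def using bit_cases2[of a] bit_cases2[of b] by (elim disjE) (simp_all add: add_self)

lemma ofbit_mult: "(ob (a * b) :: 'a) = ob a * ob b"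
  unfolding ob_def using bit_cases2[of a] bit_cases2[of b] by (elim disjE) simp_all

lemma ofbit_inj: "(ob a :: 'a) = ob b \<Longrightarrow> a = b"
  unfolding ob_def using bit_cases2[of a] bit_cases2[of b] by (elim disjE) simp_all

lemma ob0: "ob 0 = 0" and ob1: "ob 1 = 1" unfolding ob_def by simp_all

lemma ofbit_sum: "finite A \<Longrightarrow> (ob (\<Sum>j\<in>A. g j) :: 'a) = (\<Sum>j\<in>A. ob (g j))"
proof (induction A rule: finite_induct)
  case empty then show ?case by (simp add: ob0)
next
  case (insert x F)
  show ?case by (simp only: sum.insert[OF insert(1,2)] ofbit_add insert(3))
qed

lemma tr_ofbit: "trace2 T (ob b * x) = ob b * trace2 T (x::'a)"
  unfolding ob_def using bit_cases2[of b] by (elim disjE) (simp_all add: tr_0)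

lemma rep_tr:
  assumes i: "i < T"
  shows "trace2 T (\<theta> i * (\<Sum>j<T. ob (c j) * \<alpha> ^ j)) = ob (c i)"
proof -
  have "trace2 T (\<theta> i * (\<Sum>j<T. ob (c j) * \<alpha> ^ j))
      = (\<Sum>j<T. trace2 T (ob (c j) * (\<theta> i * \<alpha> ^ j)))"
    by (simp add: sum_distrib_left tr_sum algebra_simps)
  also have "\<dots> = (\<Sum>j<T. ob (c j) * (if i = j then 1 else 0))"
    using dual i by (intro sum.cong refl) (simp add: tr_ofbit)
  also have "\<dots> = (\<Sum>j<T. if j = i then ob (c i) else 0)"
    by (intro sum.cong refl) auto
  also have "\<dots> = ob (c i)" using i by simp
  finally show ?thesis .
qed

definition Bset :: "(nat \<Rightarrow> bit) set" where "Bset = {c. \<forall>j\<ge>T. c j = 0}"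
definition Fm :: "(nat \<Rightarrow> bit) \<Rightarrow> 'a" where "Fm c = (\<Sum>j<T. ob (c j) * \<alpha> ^ j)"

lemma Fm_inj: "inj_on Fm Bset"
proof (rule inj_onI)
  fix c d assume c: "c \<in> Bset" and d: "d \<in> Bset" and e: "Fm c = Fm d"
  show "c = d"
  proof
    fix i show "c i = d i"
    proof (cases "i < T")
      case True
      have "ob (c i) = (ob (d i) :: 'a)"
        using rep_tr[OF True, of c] rep_tr[OF True, of d] e unfolding Fm_def by simp
      thus ?thesis by (rule ofbit_inj)
    next
      case False thus ?thesis using c d unfolding Bset_def by auto
    qed
  qed
qed

lemma card_UNIV_bit: "card (UNIV :: bit set) = 2"
proof -
  have u: "(UNIV :: bit set) = {0, 1}" using bit_cases2 by auto
  have "card ({0, 1} :: bit set) = 2" by simp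
  thus ?thesis unfolding u .
qed

lemma card_Bset: "card Bset = 2 ^ T"
proof -
  let ?P = "PiE {..<T} (\<lambda>_. UNIV :: bit set)"
  let ?e = "\<lambda>g j. if j < T then g j else (0::bit)"
  have inj: "inj_on ?e ?P"
  proof (rule inj_onI)
    fix g h assume g: "g \<in> ?P" and h: "h \<in> ?P" and eq: "?e g = ?e h"
    show "g = h"
    proof
      fix j show "g j = h j"
      proof (cases "j < T")
        case True thus ?thesis using fun_cong[OF eq, of j] by simp
      next
        case False thus ?thesis using PiE_arb[OF g] PiE_arb[OF h] by simp
      qed
    qed
  qed
  have im: "?e ` ?P = Bset"
  proof
    show "?e ` ?P \<subseteq> Bset"
    proof (rule image_subsetI)
      fix g show "?e g \<in> Bset" unfolding Bset_def by simp
    qed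
    show "Bset \<subseteq> ?e ` ?P"
    proof
      fix c assume c: "c \<in> Bset"
      have r1: "restrict c {..<T} \<in> ?P" by simp
      have r2: "?e (restrict c {..<T}) = c"
      proof
        fix j show "?e (restrict c {..<T}) j = c j" using c unfolding Bset_def by (cases "j < T") auto
      qed
      show "c \<in> ?e ` ?P" using image_eqI[where f="?e", OF r2[symmetric] r1] .
    qed
  qed
  have "card Bset = card ?P" using card_image[OF inj] im by simp
  also have "\<dots> = 2 ^ T" by (simp add: card_PiE card_UNIV_bit)
  finally show ?thesis .
qed

lemma Fm_surj: "Fm ` Bset = UNIV"
proof -
  have "card (Fm ` Bset) = card (UNIV :: 'a set)"
    using card_image[OF Fm_inj] card_Bset card by simp
  thus ?thesis by (simp add: card_subset_eq)
qed

lemma coords_char: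
  shows "(\<forall>j\<ge>T. coords \<alpha> T x j = 0) \<and> x = Fm (coords \<alpha> T x)"
proof -
  obtain c where c: "c \<in> Bset" "x = Fm c" using Fm_surj by (metis UNIV_I imageE)
  have ex: "\<exists>!c. (\<forall>j\<ge>T. c j = 0) \<and> x = (\<Sum>j<T. of_bit (c j) * \<alpha> ^ j)"
  proof (rule ex1I[of _ c])
    show "(\<forall>j\<ge>T. c j = 0) \<and> x = (\<Sum>j<T. of_bit (c j) * \<alpha> ^ j)"
      using c unfolding Bset_def Fm_def ob_def by auto
    fix d assume "(\<forall>j\<ge>T. d j = 0) \<and> x = (\<Sum>j<T. of_bit (d j) * \<alpha> ^ j)"
    hence "d \<in> Bset" "x = Fm d" unfolding Bset_def Fm_def ob_def by auto
    thus "d = c" using c Fm_inj by (metis inj_onD)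
  qed
  have "(\<forall>j\<ge>T. coords \<alpha> T x j = 0) \<and> x = (\<Sum>j<T. of_bit (coords \<alpha> T x j) * \<alpha> ^ j)"
    unfolding coords_def by (rule theI'[OF ex])
  thus ?thesis unfolding Fm_def ob_def .
qed

lemma coords_tr: "i < T \<Longrightarrow> ob (coords \<alpha> T x i) = trace2 T (\<theta> i * x)"
  using rep_tr[of i "coords \<alpha> T x"] coords_char[of x] unfolding Fm_def by simp

lemma coords_add: "i < T \<Longrightarrow> coords \<alpha> T (x + y) i = coords \<alpha> T x i + coords \<alpha> T y i"
  by (rule ofbit_inj) (simp only: coords_tr ofbit_add tr_add distrib_left)

end


lemma (in vec_space) mult_in_span:
  assumes A: "A \<in> carrier_mat n nc" and v: "v \<in> carrier_vec nc"
  shows "A *\<^sub>v v \<in> span (set (cols A))"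
proof -
  have cs: "set (cols A) \<subseteq> carrier_vec n" using A cols_dim by blast
  have d: "\<forall>w\<in>set (cols A). dim_vec w = n" using cs by auto
  have vv: "vec (length (cols A)) (\<lambda>i. v $ i) = v" using A v by auto
  have mc: "mat_of_cols n (cols A) = A" using A by (metis carrier_matD(1) mat_of_cols_cols)
  have "lincomb_list (\<lambda>i. v $ i) (cols A) = A *\<^sub>v v"
    using lincomb_list_as_mat_mult[OF d, of "\<lambda>i. v $ i"] A vv mc by simp
  hence "A *\<^sub>v v \<in> span_list (cols A)"
    unfolding span_list_def by (intro CollectI exI[of _ "\<lambda>i. v $ i"]) simp
  thus ?thesis using span_list_as_span[OF cs] by simp
qed

lemma (in vec_space) rank_full:
  assumes A: "A \<in> carrier_mat n nc"
    and h: "\<And>i. i < n \<Longrightarrow> \<exists>v\<in>carrier_vec nc. A *\<^sub>v v = unit_vec n i"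
  shows "rank A = n"
proof -
  have cs: "set (cols A) \<subseteq> carrier_vec n" using A cols_dim by blast
  have "set (unit_vecs n) \<subseteq> span (set (cols A))"
  proof
    fix u :: "'a vec" assume "u \<in> set (unit_vecs n)"
    then obtain i where i: "i < n" "u = unit_vec n i" unfolding unit_vecs_def by auto
    then obtain v where "v \<in> carrier_vec nc" "A *\<^sub>v v = unit_vec n i" using h by blast
    thus "u \<in> span (set (cols A))" using mult_in_span[OF A] i by metis
  qed
  hence "span (set (unit_vecs n)) \<subseteq> span (set (cols A))"
    by (intro span_subsetI cs)
  hence "span (set (cols A)) = carrier_vec n"
    using span_unit_vecs_is_carrier span_is_subset2[OF cs] by auto
  hence "span_vs (set (cols A)) = V" by simp
  thus ?thesis unfolding rank_def using dim_is_n by simp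
qed


context ffs begin

lemma ob_eq0: "ob b = (0::'a) \<longleftrightarrow> b = 0"
  using ofbit_inj[of b 0] ob0 by auto

lemma dot_lemma:
  assumes k: "k < T"
  shows "ob (\<Sum>j<T. coords \<alpha> T y j * coords \<alpha> T (g * \<alpha> ^ j) k) = trace2 T (\<theta> k * (g * y))"
proof -
  have "ob (\<Sum>j<T. coords \<alpha> T y j * coords \<alpha> T (g * \<alpha> ^ j) k)
      = (\<Sum>j<T. ob (coords \<alpha> T y j) * ob (coords \<alpha> T (g * \<alpha> ^ j) k) :: 'a)"
  proof -
    have "ob (\<Sum>j<T. coords \<alpha> T y j * coords \<alpha> T (g * \<alpha> ^ j) k)
      = (\<Sum>j<T. ob (coords \<alpha> T y j * coords \<alpha> T (g * \<alpha> ^ j) k) :: 'a)"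
      by (rule ofbit_sum) simp
    also have "\<dots> = (\<Sum>j<T. ob (coords \<alpha> T y j) * ob (coords \<alpha> T (g * \<alpha> ^ j) k))"
      by (rule sum.cong) (rule refl, rule ofbit_mult)
    finally show ?thesis .
  qed
  also have "\<dots> = (\<Sum>j<T. ob (coords \<alpha> T y j) * trace2 T (\<theta> k * (g * \<alpha> ^ j)))"
    using k by (simp only: coords_tr)
  also have "\<dots> = (\<Sum>j<T. trace2 T (ob (coords \<alpha> T y j) * (\<theta> k * (g * \<alpha> ^ j))))"
    by (simp only: tr_ofbit)
  also have "\<dots> = trace2 T (\<Sum>j<T. ob (coords \<alpha> T y j) * (\<theta> k * (g * \<alpha> ^ j)))"
    by (simp only: tr_sum[OF finite_lessThan])
  also have "(\<Sum>j<T. ob (coords \<alpha> T y j) * (\<theta> k * (g * \<alpha> ^ j)))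
      = \<theta> k * (g * (\<Sum>j<T. ob (coords \<alpha> T y j) * \<alpha> ^ j))"
    by (simp add: sum_distrib_left algebra_simps)
  also have "(\<Sum>j<T. ob (coords \<alpha> T y j) * \<alpha> ^ j) = y"
    using coords_char[of y] unfolding Fm_def by simp
  finally show ?thesis .
qed

end

lemma idx_bound:
  fixes r nu Mt :: nat
  assumes r: "r < (nu + 1) * Mt"
  shows "r div Mt + (nu + 1) * (r mod Mt) < (nu + 1) * Mt"
proof -
  have Mt: "Mt > 0" using r by (cases Mt) auto
  have q: "r div Mt < nu + 1" using less_mult_imp_div_less[OF r] .
  have m: "Suc (r mod Mt) \<le> Mt" using Mt by (simp add: Suc_leI)
  have "(nu + 1) * Suc (r mod Mt) \<le> (nu + 1) * Mt" using m by (rule mult_le_mono2)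
  hence "(nu + 1) * (r mod Mt) + (nu + 1) \<le> (nu + 1) * Mt" by simp
  thus ?thesis using q by linarith
qed

lemma dm_aux:
  fixes q b m :: nat
  assumes "q < b"
  shows "(q + b * m) mod b = q" "(q + b * m) div b = m"
  using assms by (simp_all add: mod_mult_self2 div_mult_self2)

lemma idx_inj:
  fixes r r' nu Mt :: nat
  assumes r: "r < (nu + 1) * Mt" and r': "r' < (nu + 1) * Mt"
    and e: "r div Mt + (nu + 1) * (r mod Mt) = r' div Mt + (nu + 1) * (r' mod Mt)"
  shows "r = r'"
proof -
  have q: "r div Mt < nu + 1" using less_mult_imp_div_less[OF r] .
  have q': "r' div Mt < nu + 1" using less_mult_imp_div_less[OF r'] .
  note a = dm_aux[OF q, of "r mod Mt"] and b = dm_aux[OF q', of "r' mod Mt"]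
  have 1: "r div Mt = r' div Mt" using a(1) b(1) e by metis
  have 2: "r mod Mt = r' mod Mt" using a(2) b(2) e by metis
  have "r = r div Mt * Mt + r mod Mt" by simp
  also have "\<dots> = r' div Mt * Mt + r' mod Mt" using 1 2 by simp
  also have "\<dots> = r'" by simp
  finally show ?thesis .
qed


theorem theorem7:
  fixes T nu Mt :: nat
    and \<alpha> :: "'a::{field, finite}"
    and \<theta> :: "nat \<Rightarrow> 'a"
  assumes char2: "CHAR('a) = 2"
    and card: "card (UNIV :: 'a set) = 2 ^ T"
    and Mt_pos: "Mt \<ge> 1"
    and T_ge: "T \<ge> Mt * (nu + 1)"
    and prim: "primitive_element \<alpha>"
    and dual: "\<forall>i<T. \<forall>j<T. trace2 T (\<theta> i * \<alpha> ^ j) = (if i = j then 1 else 0)"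
  defines "S \<equiv> {f0 :: 'a. \<forall>i\<in>{T - nu..T - 1}. \<forall>j\<in>{1..Mt}. trace2 T (\<theta> i * (f0 * (\<alpha> ^ (nu + 1)) ^ j)) = 0}"
  shows "log 2 (real (card S)) / real T \<ge> 1 - real nu * real Mt / real T
    \<and> (\<forall>f0\<in>S. f0 \<noteq> 0 \<longrightarrow> vec_space.rank ((nu + 1) * Mt) (U_mat \<alpha> T nu Mt f0) \<ge> Mt * (nu + 1))"
proof -
  interpret ffs T \<alpha> \<theta> by unfold_locales (use char2 card dual in auto)
  define \<xi> where "\<xi> = \<alpha> ^ (nu + 1)"
  have nuT: "nu + 1 \<le> T"
  proof -
    have "1 * (nu + 1) \<le> Mt * (nu + 1)" using Mt_pos by (rule mult_le_mono1)
    thus ?thesis using T_ge by simp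
  qed
  have T1: "T \<ge> 1" using nuT by simp
  define I where "I = {T - nu..T - 1} \<times> {1..Mt}"
  define \<Phi> where "\<Phi> x = restrict (\<lambda>(i, j). coords \<alpha> T (x * \<xi> ^ j) i) I" for x
  have finI: "finite I" unfolding I_def by simp
  have Ilt: "i < T" if "(i, j) \<in> I" for i j using that T1 unfolding I_def by auto
  have cardI: "card I = nu * Mt"
  proof -
    have "card {T - nu..T - 1} = nu" using nuT by simp
    thus ?thesis unfolding I_def by (simp add: card_cartesian_product)
  qed
  have key: "trace2 T (\<theta> i * (x * \<xi> ^ j)) = 0 \<longleftrightarrow> coords \<alpha> T (x * \<xi> ^ j) i = 0" if "i < T" for i j x
    using coords_tr[OF that, of "x * \<xi> ^ j"] ob_eq0 by metis
  have S_eq: "S = {x. \<forall>(i, j)\<in>I. coords \<alpha> T (x * \<xi> ^ j) i = 0}"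
  proof -
    have "x \<in> S \<longleftrightarrow> (\<forall>(i, j)\<in>I. coords \<alpha> T (x * \<xi> ^ j) i = 0)" for x
    proof -
      have "x \<in> S \<longleftrightarrow> (\<forall>(i, j)\<in>I. trace2 T (\<theta> i * (x * \<xi> ^ j)) = 0)"
        unfolding S_def I_def \<xi>_def by auto
      also have "\<dots> \<longleftrightarrow> (\<forall>(i, j)\<in>I. coords \<alpha> T (x * \<xi> ^ j) i = 0)"
        using key Ilt by blast
      finally show ?thesis .
    qed
    thus ?thesis by blast
  qed
  have bitself: "(b::bit) + b = 0" for b using bit_cases2[of b] by (elim disjE) simp_all
  define R where "R v = (SOME x. \<Phi> x = v)" for v
  have R: "\<Phi> (R (\<Phi> x)) = \<Phi> x" for x unfolding R_def by (rule someI) (rule refl)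
  define h where "h x = (\<Phi> x, x + R (\<Phi> x))" for x
  have inj: "inj h"
  proof (rule injI)
    fix x y assume "h x = h y"
    hence "\<Phi> x = \<Phi> y" "x + R (\<Phi> x) = y + R (\<Phi> y)" unfolding h_def by auto
    thus "x = y" by simp
  qed
  have hS: "h x \<in> range \<Phi> \<times> S" for x
  proof -
    let ?z = "R (\<Phi> x)"
    have "x + ?z \<in> S" unfolding S_eq
    proof (safe)
      fix i j assume ij: "(i, j) \<in> I"
      have "coords \<alpha> T (?z * \<xi> ^ j) i = \<Phi> ?z (i, j)" using ij unfolding \<Phi>_def by simp
      also have "\<dots> = \<Phi> x (i, j)" using R by simp
      also have "\<dots> = coords \<alpha> T (x * \<xi> ^ j) i" using ij unfolding \<Phi>_def by simp
      finally have zx: "coords \<alpha> T (?z * \<xi> ^ j) i = coords \<alpha> T (x * \<xi> ^ j) i" .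
      have "coords \<alpha> T ((x + ?z) * \<xi> ^ j) i = coords \<alpha> T (x * \<xi> ^ j + ?z * \<xi> ^ j) i"
        by (simp add: distrib_right)
      also have "\<dots> = coords \<alpha> T (x * \<xi> ^ j) i + coords \<alpha> T (?z * \<xi> ^ j) i"
        using Ilt[OF ij] by (rule coords_add)
      also have "\<dots> = 0" unfolding zx by (rule bitself)
      finally show "coords \<alpha> T ((x + ?z) * \<xi> ^ j) i = 0" .
    qed
    thus ?thesis unfolding h_def by simp
  qed
  have rangePhi: "range \<Phi> \<subseteq> PiE I (\<lambda>_. UNIV)" unfolding \<Phi>_def by auto
  have cr: "card (range \<Phi>) \<le> 2 ^ (nu * Mt)"
  proof -
    have "card (range \<Phi>) \<le> card (PiE I (\<lambda>_. UNIV :: bit set))"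
    proof (rule card_mono)
      have "finite (UNIV :: bit set)" using card_UNIV_bit card.infinite by fastforce
      thus "finite (PiE I (\<lambda>_. UNIV :: bit set))" using finI by (intro finite_PiE) auto
    qed (rule rangePhi)
    also have "\<dots> = 2 ^ (nu * Mt)" by (simp add: card_PiE finI card_UNIV_bit cardI)
    finally show ?thesis .
  qed
  have finS: "finite S" by simp
  have "card (UNIV :: 'a set) \<le> card (range \<Phi> \<times> S)"
    by (rule card_inj_on_le[OF inj_on_subset[OF inj subset_UNIV]]) (use hS in blast, simp add: finS)
  also have "\<dots> = card (range \<Phi>) * card S" by (rule card_cartesian_product)
  also have "\<dots> \<le> 2 ^ (nu * Mt) * card S" using cr by simp
  finally have ineq: "2 ^ T \<le> 2 ^ (nu * Mt) * card S" using card by simp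
  have cpos: "card S > 0" using ineq by (cases "card S") auto
  have rineq: "(2::real) ^ T \<le> 2 ^ (nu * Mt) * real (card S)"
  proof -
    have "real (2 ^ T) \<le> real (2 ^ (nu * Mt) * card S)" using ineq by (simp only: of_nat_le_iff)
    thus ?thesis by simp
  qed
  have "log 2 ((2::real) ^ T) \<le> log 2 (2 ^ (nu * Mt) * real (card S))"
    using rineq cpos by (subst log_le_cancel_iff) auto
  also have "\<dots> = log 2 (2 ^ (nu * Mt)) + log 2 (real (card S))"
    using cpos by (subst log_mult) auto
  finally have "real T \<le> real (nu * Mt) + log 2 (real (card S))"
    by (simp add: log_nat_power)
  hence L: "real T - real nu * real Mt \<le> log 2 (real (card S))" by simp
  have Tpos: "real T > 0" using T1 by simp
  have part1: "log 2 (real (card S)) / real T \<ge> 1 - real nu * real Mt / real T"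
  proof -
    have "1 - real nu * real Mt / real T = (real T - real nu * real Mt) / real T"
      using Tpos by (simp add: diff_divide_distrib)
    also have "\<dots> \<le> log 2 (real (card S)) / real T"
      using L Tpos by (simp add: divide_right_mono)
    finally show ?thesis .
  qed
  have part2: "vec_space.rank ((nu + 1) * Mt) (U_mat \<alpha> T nu Mt f0) \<ge> Mt * (nu + 1)"
    if f0: "f0 \<noteq> 0" for f0
  proof -
    let ?n = "(nu + 1) * Mt"
    let ?U = "U_mat \<alpha> T nu Mt f0"
    let ?E = "\<lambda>r. r div Mt + (nu + 1) * (r mod Mt)"
    have nT: "?n \<le> T" using T_ge by (simp add: mult.commute)
    have Uc: "?U \<in> carrier_mat ?n T" unfolding U_mat_def by simp
    have Uidx: "?U $$ (r, j) = coords \<alpha> T (\<alpha> ^ (r div Mt) * (f0 * (\<alpha> ^ (nu + 1)) ^ (r mod Mt))) j"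
      if "r < ?n" "j < T" for r j using that unfolding U_mat_def by simp
    have yr: "inverse f0 * (\<alpha> ^ (r div Mt) * (f0 * (\<alpha> ^ (nu + 1)) ^ (r mod Mt))) = \<alpha> ^ ?E r" for r
      using f0 by (simp add: power_add power_mult field_simps)
    have "vec_space.rank ?n ?U = ?n"
    proof (rule vec_space.rank_full[OF Uc])
      fix i assume i: "i < ?n"
      define e where "e = ?E i"
      have eT: "e < T" using idx_bound[OF i] nT unfolding e_def by simp
      define v where "v = vec T (\<lambda>j. coords \<alpha> T (inverse f0 * \<alpha> ^ j) e)"
      have vc: "v \<in> carrier_vec T" unfolding v_def by simp
      have "?U *\<^sub>v v = unit_vec ?n i"
      proof (rule eq_vecI)
        show "dim_vec (?U *\<^sub>v v) = dim_vec (unit_vec ?n i)" using Uc by simp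
        fix r assume "r < dim_vec (unit_vec ?n i)"
        hence r: "r < ?n" by simp
        have ErT: "?E r < T" using idx_bound[OF r] nT by simp
        have "(?U *\<^sub>v v) $ r = (\<Sum>j<T. coords \<alpha> T (\<alpha> ^ (r div Mt) * (f0 * (\<alpha> ^ (nu + 1)) ^ (r mod Mt))) j
                 * coords \<alpha> T (inverse f0 * \<alpha> ^ j) e)"
        proof -
          have "(?U *\<^sub>v v) $ r = row ?U r \<bullet> v" using Uc r by (intro index_mult_mat_vec) simp
          also have "\<dots> = (\<Sum>j\<in>{0..<T}. row ?U r $ j * v $ j)"
            unfolding scalar_prod_def v_def by (simp only: dim_vec)
          also have "\<dots> = (\<Sum>j<T. coords \<alpha> T (\<alpha> ^ (r div Mt) * (f0 * (\<alpha> ^ (nu + 1)) ^ (r mod Mt))) j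
                 * coords \<alpha> T (inverse f0 * \<alpha> ^ j) e)"
          proof (rule sum.cong[OF atLeast0LessThan])
            fix j assume "j \<in> {..<T}"
            hence j: "j < T" by simp
            show "row ?U r $ j * v $ j = coords \<alpha> T (\<alpha> ^ (r div Mt) * (f0 * (\<alpha> ^ (nu + 1)) ^ (r mod Mt))) j
                 * coords \<alpha> T (inverse f0 * \<alpha> ^ j) e"
              using Uc r j Uidx[OF r j] unfolding v_def by simp
          qed
          finally show ?thesis .
        qed
        hence "ob ((?U *\<^sub>v v) $ r) = trace2 T (\<theta> e * (inverse f0 * (\<alpha> ^ (r div Mt) * (f0 * (\<alpha> ^ (nu + 1)) ^ (r mod Mt)))))"
          using dot_lemma[OF eT] by simp
        also have "\<dots> = trace2 T (\<theta> e * \<alpha> ^ ?E r)" by (simp only: yr)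
        also have "\<dots> = (if e = ?E r then 1 else 0)" using dual eT ErT by simp
        also have "\<dots> = ob (unit_vec ?n i $ r)"
        proof -
          have ee: "e = ?E r \<longleftrightarrow> r = i" using idx_inj[OF r i] unfolding e_def by auto
          have uv: "unit_vec ?n i $ r = (if r = i then 1 else 0)" using r i by (simp add: unit_vec_def)
          show ?thesis unfolding uv using ee by (cases "r = i") (simp_all add: ob0 ob1)
        qed
        finally show "(?U *\<^sub>v v) $ r = unit_vec ?n i $ r" by (rule ofbit_inj)
      qed
      thus "\<exists>v\<in>carrier_vec T. ?U *\<^sub>v v = unit_vec ?n i" using vc by blast
    qed
    thus ?thesis by (simp add: mult.commute)
  qed
  show ?thesis using part1 part2 by blast
qed


end
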